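(* Let $\mathbb{k}$ be any field and $\mathfrak{h}$ a left Leibniz algebra over $\mathbb{k}$ of finite dimension $n$ with ordered basis $\mathbf{b}=(x_1,\ldots,x_n)$ and structure constants $C^i_{jk}$ given by $[x_j,x_k]=\sum_iC^i_{jk}x_i$. Let $\mathcal{G}^i_j,\bar{\mathcal{G}}^i_j$ be the generators of $\mathcal{O}(\mathrm{Aut}(\mathfrak{h}))$ relative to $\mathbf{b}$, and let $\tilde x$ denote the image of $x\in\mathfrak{h}$ in $\mathfrak{h}_{Lie}$. Then there exists a unique Hopf pairing $\langle-,-\rangle\colon U(\mathfrak{h}_{Lie})\otimes\mathcal{O}(\mathrm{Aut}(\mathfrak{h}))\to\mathbb{k}$ such that $\langle\tilde x_k,\mathcal{G}^i_j\rangle=C^i_{kj}$ for all $i,j,k\in\{1,\ldots,n\}$. This Hopf pairing does not depend on the choice of basis $\mathbf{b}$.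
   Context: A left Leibniz algebra is a vector space $\mathfrak{h}$ with a bilinear bracket satisfying $[x,[y,z]]=[[x,y],z]+[y,[x,z]]$. $\mathfrak{h}_{Lie}$ is the quotient of $\mathfrak{h}$ by the two-sided ideal generated by all $[x,x]$; $U(\mathfrak{h}_{Lie})$ is its universal enveloping algebra with its standard Hopf algebra structure. $\mathcal{O}(\mathrm{Aut}(\mathfrak{h}))$ is the coordinate Hopf algebra of the affine algebraic group of automorphisms of $\mathfrak{h}$; relative to $\mathbf{b}$ it is the commutative algebra generated by $\mathcal{G}^i_j,\bar{\mathcal{G}}^i_j$ ($\mathcal{G}^i_j$ gives the $(i,j)$ matrix entry of an automorphism $\psi$ in basis $\mathbf{b}$, $\psi(x_j)=\sum_i\mathcal{G}^i_j(\psi)x_i$; $\bar{\mathcal{G}}^i_j$ that of $\psi^{-1}$) with relations $\sum_{l,m}C^k_{lm}\mathcal{G}^l_i\mathcal{G}^m_j=\sum_r\mathcal{G}^k_rC^r_{ij}$, $\sum_k\mathcal{G}^i_k\bar{\mathcal{G}}^k_j=\delta^i_j=\sum_k\bar{\mathcal{G}}^i_k\mathcal{G}^k_j$, and Hopf structure $\Delta(\mathcal{G}^i_j)=\sum_k\mathcal{G}^i_k\otimes\mathcal{G}^k_j$, $\Delta(\bar{\mathcal{G}}^i_j)=\sum_k\bar{\mathcal{G}}^k_j\otimes\bar{\mathcal{G}}^i_k$, $\epsilon(\mathcal{G}^i_j)=\epsilon(\bar{\mathcal{G}}^i_j)=\delta^i_j$, $S(\mathcal{G}^i_j)=\bar{\mathcal{G}}^i_j$,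 $S(\bar{\mathcal{G}}^i_j)=\mathcal{G}^i_j$. A Hopf pairing $B\otimes H\to\mathbb{k}$ of bialgebras is a bilinear form (not required nondegenerate) with $\langle\Delta_B(b),h\otimes k\rangle=\langle b,hk\rangle$, $\langle b,1\rangle=\epsilon_B(b)$, $\langle b\otimes c,\Delta_H(h)\rangle=\langle bc,h\rangle$, $\langle 1,h\rangle=\epsilon_H(h)$, with componentwise pairing of tensor products. *)

theory Defs
  imports "HOL-Library.Multiset"
begin

text \<open>Concrete model. The Leibniz algebra h has a basis indexed by the finite type 'n
 (n = CARD('n)); C i j k is the structure constant C^i_{jk}, i.e.
 [x_j, x_k] = sum_i C i j k x_i.

 U(h_Lie) is presented as the tensor algebra T(h) (basis: words 'n list) modulo the
 two-sided ideal generated by x_a x_b - x_b x_a - [x_a, x_b]; the image of x_k is the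
 word [k].  O(Aut h) is the polynomial algebra in the variables G i j, Gb i j (basis:
 monomials = multisets of variables) modulo the defining relations.  A bilinear form
 U(h_Lie) x O(Aut h) -> k is thus the same as a function on words x monomials which
 vanishes on spanning sets of both ideals.\<close>

datatype 'n gvar = G 'n 'n | Gb 'n 'n

type_synonym ('n, 'k) pairing = "'n list \<Rightarrow> 'n gvar multiset \<Rightarrow> 'k"

definition leibniz_consts :: "('n::finite \<Rightarrow> 'n \<Rightarrow> 'n \<Rightarrow> 'k::field) \<Rightarrow> bool" where
  "leibniz_consts C \<longleftrightarrow> (\<forall>a b c i.
     (\<Sum>m\<in>UNIV. C m b c * C i a m) =
     (\<Sum>m\<in>UNIV. C m a b * C i m c) + (\<Sum>m\<in>UNIV. C m a c * C i b m))"

definition vanishes_U :: "('n::finite \<Rightarrow> 'n \<Rightarrow> 'n \<Rightarrow> 'k::field) \<Rightarrow> ('n, 'k) pairing \<Rightarrow> bool" where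
  "vanishes_U C p \<longleftrightarrow> (\<forall>u v a b f.
     p (u @ [a, b] @ v) f - p (u @ [b, a] @ v) f - (\<Sum>m\<in>UNIV. C m a b * p (u @ [m] @ v) f) = 0)"

definition vanishes_O :: "('n::finite \<Rightarrow> 'n \<Rightarrow> 'n \<Rightarrow> 'k::field) \<Rightarrow> ('n, 'k) pairing \<Rightarrow> bool" where
  "vanishes_O C p \<longleftrightarrow> (\<forall>w f.
     (\<forall>k i j. (\<Sum>l\<in>UNIV. \<Sum>m\<in>UNIV. C k l m * p w (f + {#G l i, G m j#}))
              - (\<Sum>r\<in>UNIV. C r i j * p w (f + {#G k r#})) = 0) \<and>
     (\<forall>i j. (\<Sum>k\<in>UNIV. p w (f + {#G i k, Gb k j#})) - (if i = j then p w f else 0) = 0) \<and>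
     (\<forall>i j. (\<Sum>k\<in>UNIV. p w (f + {#Gb i k, G k j#})) - (if i = j then p w f else 0) = 0))"

text \<open>Coproduct of U: Delta(x) = x (x) 1 + 1 (x) x, so a word splits as a sum over subsets.\<close>
definition delta_U_cond :: "('n, 'k::field) pairing \<Rightarrow> bool" where
  "delta_U_cond p \<longleftrightarrow> (\<forall>w f g. p w (f + g) =
     (\<Sum>S\<in>Pow {..<length w}. p (nths w S) f * p (nths w ({..<length w} - S)) g))"

definition eps_U_cond :: "('n, 'k::field) pairing \<Rightarrow> bool" where
  "eps_U_cond p \<longleftrightarrow> (\<forall>w. p w {#} = (if w = [] then 1 else 0))"

text \<open>Coproduct of O: Delta(G i j) = sum_k G i k (x) G k j,
  Delta(Gb i j) = sum_k Gb k j (x) Gb i k.\<close>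
fun left_part :: "'n gvar \<Rightarrow> 'n \<Rightarrow> 'n gvar" where
  "left_part (G i j) k = G i k"
| "left_part (Gb i j) k = Gb k j"

fun right_part :: "'n gvar \<Rightarrow> 'n \<Rightarrow> 'n gvar" where
  "right_part (G i j) k = G k j"
| "right_part (Gb i j) k = Gb i k"

definition delta_O_cond :: "('n::finite, 'k::field) pairing \<Rightarrow> bool" where
  "delta_O_cond p \<longleftrightarrow> (\<forall>u v fl. p (u @ v) (mset fl) =
     (\<Sum>ks\<in>{ks. length ks = length fl}.
        p u (mset (map2 left_part fl ks)) * p v (mset (map2 right_part fl ks))))"

fun gdiag :: "'n gvar \<Rightarrow> bool" where
  "gdiag (G i j) = (i = j)"
| "gdiag (Gb i j) = (i = j)"

definition eps_O_cond :: "('n, 'k::field) pairing \<Rightarrow> bool" where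
  "eps_O_cond p \<longleftrightarrow> (\<forall>f. p [] f = (if (\<forall>x\<in>#f. gdiag x) then 1 else 0))"

definition hopf_pairing :: "('n::finite \<Rightarrow> 'n \<Rightarrow> 'n \<Rightarrow> 'k::field) \<Rightarrow> ('n, 'k) pairing \<Rightarrow> bool" where
  "hopf_pairing C p \<longleftrightarrow> vanishes_U C p \<and> vanishes_O C p \<and>
     delta_U_cond p \<and> eps_U_cond p \<and> delta_O_cond p \<and> eps_O_cond p"

definition pairs_generators :: "('n \<Rightarrow> 'n \<Rightarrow> 'n \<Rightarrow> 'k) \<Rightarrow> ('n, 'k) pairing \<Rightarrow> bool" where
  "pairs_generators C p \<longleftrightarrow> (\<forall>i j k. p [k] {#G i j#} = C i k j)"

text \<open>Change of basis: x'_j = sum_i P i j x_i, with Q = P^{-1}.\<close>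
definition inverse_matrices :: "('n::finite \<Rightarrow> 'n \<Rightarrow> 'k::field) \<Rightarrow> ('n \<Rightarrow> 'n \<Rightarrow> 'k) \<Rightarrow> bool" where
  "inverse_matrices P Q \<longleftrightarrow>
     (\<forall>i j. (\<Sum>k\<in>UNIV. P i k * Q k j) = (if i = j then 1 else 0)) \<and>
     (\<forall>i j. (\<Sum>k\<in>UNIV. Q i k * P k j) = (if i = j then 1 else 0))"

definition change_consts :: "('n::finite \<Rightarrow> 'n \<Rightarrow> 'k::field) \<Rightarrow> ('n \<Rightarrow> 'n \<Rightarrow> 'k) \<Rightarrow>
    ('n \<Rightarrow> 'n \<Rightarrow> 'n \<Rightarrow> 'k) \<Rightarrow> ('n \<Rightarrow> 'n \<Rightarrow> 'n \<Rightarrow> 'k)" where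
  "change_consts P Q C i j k = (\<Sum>a\<in>UNIV. \<Sum>b\<in>UNIV. \<Sum>m\<in>UNIV. Q i m * C m a b * P a j * P b k)"

text \<open>Canonical identification of the presentations: G'^i_j = sum_{a,c} Q i a G^a_c P c j,
  Gb'^i_j = sum_{a,c} Q i a Gb^a_c P c j, and x'_k~ = sum_a P a k x_a~.\<close>
fun subst_var :: "'n gvar \<Rightarrow> 'n \<times> 'n \<Rightarrow> 'n gvar" where
  "subst_var (G i j) (a, c) = G a c"
| "subst_var (Gb i j) (a, c) = Gb a c"

fun subst_coef :: "('n \<Rightarrow> 'n \<Rightarrow> 'k::field) \<Rightarrow> ('n \<Rightarrow> 'n \<Rightarrow> 'k) \<Rightarrow> 'n gvar \<Rightarrow> 'n \<times> 'n \<Rightarrow> 'k" where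
  "subst_coef P Q (G i j) (a, c) = Q i a * P c j"
| "subst_coef P Q (Gb i j) (a, c) = Q i a * P c j"

text \<open>transported P Q p w fl = value of p on the images (in the b-presentations) of the
  word w in the x'~ and of the monomial fl in the G', Gb'.\<close>
definition transported :: "('n::finite \<Rightarrow> 'n \<Rightarrow> 'k::field) \<Rightarrow> ('n \<Rightarrow> 'n \<Rightarrow> 'k) \<Rightarrow> ('n, 'k) pairing \<Rightarrow>
    'n list \<Rightarrow> 'n gvar list \<Rightarrow> 'k" where
  "transported P Q p w fl =
     (\<Sum>as\<in>{as. length as = length w}. (\<Prod>t<length w. P (as ! t) (w ! t)) *
        (\<Sum>acs\<in>{acs. length acs = length fl}. (\<Prod>t<length fl. subst_coef P Q (fl ! t) (acs ! t)) *
           p as (mset (map2 subst_var fl acs))))"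

end

theory Submission
  imports Defs "HOL-Combinatorics.Permutations"
begin

fun gcoef :: "('n \<Rightarrow> 'n \<Rightarrow> 'n \<Rightarrow> 'k::field) \<Rightarrow> 'n \<Rightarrow> 'n gvar \<Rightarrow> 'n \<Rightarrow> 'k" where
  "gcoef C a (G i j) k = C i a k"
| "gcoef C a (Gb i j) k = - C k a j"

fun gshift :: "'n gvar \<Rightarrow> 'n \<Rightarrow> 'n gvar" where
  "gshift (G i j) k = G k j"
| "gshift (Gb i j) k = Gb i k"

definition epsl :: "'n gvar list \<Rightarrow> 'k::field" where
  "epsl fl = (if \<forall>x\<in>set fl. gdiag x then 1 else 0)"

primrec pl :: "('n::finite \<Rightarrow> 'n \<Rightarrow> 'n \<Rightarrow> 'k::field) \<Rightarrow> 'n list \<Rightarrow> 'n gvar list \<Rightarrow> 'k" where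
  "pl C [] fl = epsl fl"
| "pl C (a # v) fl = (\<Sum>s<length fl. \<Sum>k\<in>UNIV. gcoef C a (fl ! s) k * pl C v (fl[s := gshift (fl ! s) k]))"

lemma epsl_append: "epsl (fl @ gl) = epsl fl * epsl gl"
  by (auto simp add: epsl_def)

lemma epsl_Nil[simp]: "epsl [] = 1" by (simp add: epsl_def)

lemma pl_Cons_Nil[simp]: "pl C (a # v) [] = 0" by simp

lemma pl_perm:
  assumes "\<pi> permutes {..<length fl}"
  shows "pl C w (permute_list \<pi> fl) = pl C w fl"
  using assms
proof (induction w arbitrary: fl \<pi>)
  case Nil
  then show ?case by (simp add: epsl_def)
next
  case (Cons a v)
  let ?n = "length fl"
  have upd: "(permute_list \<pi> fl)[s := y] = permute_list \<pi> (fl[\<pi> s := y])" if "s < ?n" for s y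
  proof -
    have inj: "\<And>t. \<pi> t = \<pi> s \<Longrightarrow> t = s" using permutes_inj[OF Cons.prems] by (auto dest: injD)
    show ?thesis
    proof (rule nth_equalityI)
      show "length ((permute_list \<pi> fl)[s := y]) = length (permute_list \<pi> (fl[\<pi> s := y]))" by simp
      fix i assume "i < length ((permute_list \<pi> fl)[s := y])"
      then have i: "i < ?n" by simp
      have pi: "\<pi> i < ?n" using permutes_in_image[OF Cons.prems] i by simp
      show "(permute_list \<pi> fl)[s := y] ! i = permute_list \<pi> (fl[\<pi> s := y]) ! i"
      proof (cases "i = s")
        case True then show ?thesis using i pi that by (simp add: permute_list_def)
      next
        case False
        then have "\<pi> i \<noteq> \<pi> s" using inj[of i] by blast
        then show ?thesis using i pi that False by (simp add: permute_list_def)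
      qed
    qed
  qed
  have "pl C (a # v) (permute_list \<pi> fl) =
     (\<Sum>s<?n. \<Sum>k\<in>UNIV. gcoef C a (fl ! \<pi> s) k * pl C v (permute_list \<pi> (fl[\<pi> s := gshift (fl ! \<pi> s) k])))"
    by (auto simp: permute_list_nth[OF Cons.prems] upd intro!: sum.cong)
  also have "\<dots> = (\<Sum>s<?n. \<Sum>k\<in>UNIV. gcoef C a (fl ! \<pi> s) k * pl C v (fl[\<pi> s := gshift (fl ! \<pi> s) k]))"
    by (intro sum.cong refl arg_cong2[where f="(*)"] Cons.IH) (simp add: Cons.prems)
  also have "\<dots> = (\<Sum>s<?n. \<Sum>k\<in>UNIV. gcoef C a (fl ! s) k * pl C v (fl[s := gshift (fl ! s) k]))"
    using sum.permute[OF Cons.prems, where g = "\<lambda>s. \<Sum>k\<in>UNIV. gcoef C a (fl ! s) k * pl C v (fl[s := gshift (fl ! s) k])"]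
    by (simp add: comp_def)
  finally show ?case by simp
qed

lemma pl_mset:
  assumes "mset fl = mset gl"
  shows "pl C w fl = pl C w gl"
proof -
  obtain \<pi> where "\<pi> permutes {..<length gl}" "permute_list \<pi> gl = fl"
    using mset_eq_permutation[OF assms] by blast
  then show ?thesis using pl_perm by metis
qed

lemma finite_lists[simp]: "finite {xs::('a::finite) list. length xs = n}"
  using finite_lists_length_eq[of "UNIV::'a set" n] by simp

fun gidx :: "'n gvar \<Rightarrow> 'n" where
  "gidx (G i j) = i"
| "gidx (Gb i j) = j"

lemma epsl_Cons: "epsl (x # xs) = (if gdiag x then epsl xs else 0)"
  by (simp add: epsl_def)

lemma epsl_left:
  "length ks = length fl \<Longrightarrow> epsl (map2 left_part fl ks) = (if ks = map gidx fl then 1 else 0)"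
proof (induction fl arbitrary: ks)
  case Nil then show ?case by simp
next
  case (Cons x fl)
  then obtain k ks' where ks: "ks = k # ks'" "length ks' = length fl" by (cases ks) auto
  show ?case using Cons.IH[OF ks(2)] ks by (cases x) (auto simp: epsl_Cons)
qed

lemma right_gidx: "map2 right_part fl (map gidx fl) = fl"
proof (induction fl)
  case Nil then show ?case by simp
next
  case (Cons x fl) then show ?case by (cases x) auto
qed

lemma map2_update1: "map2 f (xs[s := y]) ys = (map2 f xs ys)[s := f y (ys ! s)]"
  apply (rule nth_equalityI)
   apply simp
  apply (case_tac "i = s")
   apply auto
  done

lemma map2_upd_same: "s < length xs \<Longrightarrow> s < length ys \<Longrightarrow> (map2 right_part xs ys)[s := right_part (xs ! s) (ys ! s)] = map2 right_part xs ys"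
  by (metis (no_types, lifting) length_map length_zip list_update_id min_less_iff_conj nth_map nth_zip
      case_prod_conv)

lemma left_gshift: "left_part (gshift x k) c = gshift (left_part x c) k"
  by (cases x) auto
lemma right_gshift: "right_part (gshift x k) c = right_part x c"
  by (cases x) auto
lemma gcoef_left: "gcoef C a (left_part x c) k = gcoef C a x k"
  by (cases x) auto

lemma pl_delta_O:
  fixes C :: "'n::finite \<Rightarrow> 'n \<Rightarrow> 'n \<Rightarrow> 'k::field"
  shows "pl C (u @ v) fl = (\<Sum>ks\<in>{ks. length ks = length fl}.
      pl C u (map2 left_part fl ks) * pl C v (map2 right_part fl ks))"
proof (induction u arbitrary: fl)
  case Nil
  have "(\<Sum>ks\<in>{ks. length ks = length fl}. pl C [] (map2 left_part fl ks) * pl C v (map2 right_part fl ks))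
     = (\<Sum>ks\<in>{ks. length ks = length fl}. if ks = map gidx fl then pl C v (map2 right_part fl ks) else 0)"
    by (intro sum.cong refl) (simp add: epsl_left)
  also have "\<dots> = pl C v fl"
    by (simp add: sum.delta' right_gidx)
  finally show ?case by simp
next
  case (Cons a u)
  let ?L = "{ks. length ks = length fl}"
  have "pl C ((a # u) @ v) fl = (\<Sum>s<length fl. \<Sum>k\<in>UNIV. gcoef C a (fl ! s) k * (\<Sum>ks\<in>?L.
       pl C u (map2 left_part (fl[s := gshift (fl ! s) k]) ks) * pl C v (map2 right_part (fl[s := gshift (fl ! s) k]) ks)))"
    by (simp add: Cons.IH)
  also have "\<dots> = (\<Sum>s<length fl. \<Sum>k\<in>UNIV. \<Sum>ks\<in>?L.
       gcoef C a (left_part (fl ! s) (ks ! s)) k *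
         pl C u ((map2 left_part fl ks)[s := gshift (left_part (fl ! s) (ks ! s)) k]) * pl C v (map2 right_part fl ks))"
    unfolding sum_distrib_left
  proof (intro sum.cong refl)
    fix s k and ks :: "'n list" assume s: "s \<in> {..<length fl}" and ks: "ks \<in> ?L"
    then have "s < length fl" "length ks = length fl" by auto
    then show "gcoef C a (fl ! s) k * (pl C u (map2 left_part (fl[s := gshift (fl ! s) k]) ks) * pl C v (map2 right_part (fl[s := gshift (fl ! s) k]) ks))
      = gcoef C a (left_part (fl ! s) (ks ! s)) k *
         pl C u ((map2 left_part fl ks)[s := gshift (left_part (fl ! s) (ks ! s)) k]) * pl C v (map2 right_part fl ks)"
      by (simp add: map2_update1 left_gshift right_gshift gcoef_left map2_upd_same mult.assoc)
  qed
  also have "\<dots> = (\<Sum>ks\<in>?L. \<Sum>s<length fl. \<Sum>k\<in>UNIV.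
       gcoef C a (left_part (fl ! s) (ks ! s)) k *
         pl C u ((map2 left_part fl ks)[s := gshift (left_part (fl ! s) (ks ! s)) k]) * pl C v (map2 right_part fl ks))"
    by (subst sum.swap, subst (2) sum.swap, rule refl)
  also have "\<dots> = (\<Sum>ks\<in>?L. pl C (a # u) (map2 left_part fl ks) * pl C v (map2 right_part fl ks))"
    by (auto simp: sum_distrib_right intro!: sum.cong)
  finally show ?case .
qed

lemma sum_lessThan_add: "(\<Sum>s<m+(l::nat). f s) = (\<Sum>s<m. f s) + (\<Sum>t<l. f (m+t))"
  by (induction l) (simp_all add: add.assoc)

lemma sum_Pow_Suc:
  "(\<Sum>S\<in>Pow {..<Suc n}. F S) = (\<Sum>S\<in>Pow {..<n}. F (Suc ` S)) + (\<Sum>S\<in>Pow {..<n}. F (insert 0 (Suc ` S)))"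
proof -
  have P: "Pow {..<Suc n} = (image Suc) ` Pow {..<n} \<union> (\<lambda>S. insert 0 (Suc ` S)) ` Pow {..<n}"
    unfolding lessThan_Suc_eq_insert_0 Pow_insert
    by (auto simp: image_image subset_image_iff image_Pow_surj[symmetric])
  have i1: "inj_on (image Suc) (Pow {..<n})"
    by (simp add: inj_on_def inj_image_eq_iff)
  have i2: "inj_on (\<lambda>S. insert 0 (Suc ` S)) (Pow {..<n})"
  proof (rule inj_onI)
    fix S T assume "insert 0 (Suc ` S) = insert (0::nat) (Suc ` T)"
    then have "Suc ` S = Suc ` T" by (metis Diff_insert_absorb image_iff nat.distinct(1))
    then show "S = T" by (simp add: inj_image_eq_iff)
  qed
  have d: "(image Suc) ` Pow {..<n} \<inter> (\<lambda>S. insert 0 (Suc ` S)) ` Pow {..<n} = {}"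
    by auto
  show ?thesis
    unfolding P by (simp add: sum.union_disjoint d sum.reindex i1 i2)
qed

lemma Suc_image_pre: "{j. Suc j \<in> Suc ` S} = S" by auto

lemma nths_Suc_image: "nths (a # v) (Suc ` S) = nths v S"
  by (simp add: nths_Cons Suc_image_pre)

lemma nths_insert0_Suc_image: "nths (a # v) (insert 0 (Suc ` S)) = a # nths v S"
  by (simp add: nths_Cons Suc_image_pre)

lemma compl_Suc_image: "S \<subseteq> {..<n} \<Longrightarrow> {..<Suc n} - Suc ` S = insert 0 (Suc ` ({..<n} - S))"
  unfolding lessThan_Suc_eq_insert_0 by auto

lemma compl_insert0_Suc_image: "S \<subseteq> {..<n} \<Longrightarrow> {..<Suc n} - insert 0 (Suc ` S) = Suc ` ({..<n} - S)"
  unfolding lessThan_Suc_eq_insert_0 by auto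

lemma pl_delta_U:
  fixes C :: "'n::finite \<Rightarrow> 'n \<Rightarrow> 'n \<Rightarrow> 'k::field"
  shows "pl C w (fl @ gl) = (\<Sum>S\<in>Pow {..<length w}.
      pl C (nths w S) fl * pl C (nths w ({..<length w} - S)) gl)"
proof (induction w arbitrary: fl gl)
  case Nil
  then show ?case by (simp add: epsl_append)
next
  case (Cons a v)
  let ?n = "length v"
  let ?P = "Pow {..<?n}"
  have L1: "(\<Sum>s<length fl. \<Sum>k\<in>UNIV. gcoef C a ((fl @ gl) ! s) k * pl C v ((fl @ gl)[s := gshift ((fl @ gl) ! s) k]))
     = (\<Sum>S\<in>?P. pl C (a # nths v S) fl * pl C (nths v ({..<?n} - S)) gl)"
  proof -
    have "(\<Sum>s<length fl. \<Sum>k\<in>UNIV. gcoef C a ((fl @ gl) ! s) k * pl C v ((fl @ gl)[s := gshift ((fl @ gl) ! s) k]))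
      = (\<Sum>s<length fl. \<Sum>k\<in>UNIV. \<Sum>S\<in>?P. gcoef C a (fl ! s) k * pl C (nths v S) (fl[s := gshift (fl ! s) k]) * pl C (nths v ({..<?n} - S)) gl)"
      by (intro sum.cong refl) (simp add: nth_append list_update_append1 Cons.IH sum_distrib_left mult.assoc)
    also have "\<dots> = (\<Sum>S\<in>?P. \<Sum>s<length fl. \<Sum>k\<in>UNIV. gcoef C a (fl ! s) k * pl C (nths v S) (fl[s := gshift (fl ! s) k]) * pl C (nths v ({..<?n} - S)) gl)"
      by (subst (2) sum.swap, subst sum.swap, rule refl)
    also have "\<dots> = (\<Sum>S\<in>?P. pl C (a # nths v S) fl * pl C (nths v ({..<?n} - S)) gl)"
      by (simp add: sum_distrib_right)
    finally show ?thesis .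
  qed
  have L2: "(\<Sum>t<length gl. \<Sum>k\<in>UNIV. gcoef C a ((fl @ gl) ! (length fl + t)) k * pl C v ((fl @ gl)[length fl + t := gshift ((fl @ gl) ! (length fl + t)) k]))
     = (\<Sum>S\<in>?P. pl C (nths v S) fl * pl C (a # nths v ({..<?n} - S)) gl)"
  proof -
    have "(\<Sum>t<length gl. \<Sum>k\<in>UNIV. gcoef C a ((fl @ gl) ! (length fl + t)) k * pl C v ((fl @ gl)[length fl + t := gshift ((fl @ gl) ! (length fl + t)) k]))
      = (\<Sum>t<length gl. \<Sum>k\<in>UNIV. \<Sum>S\<in>?P. pl C (nths v S) fl * (gcoef C a (gl ! t) k * pl C (nths v ({..<?n} - S)) (gl[t := gshift (gl ! t) k])))"
      by (intro sum.cong refl) (simp add: nth_append list_update_append Cons.IH sum_distrib_left mult.assoc mult.left_commute)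
    also have "\<dots> = (\<Sum>S\<in>?P. \<Sum>t<length gl. \<Sum>k\<in>UNIV. pl C (nths v S) fl * (gcoef C a (gl ! t) k * pl C (nths v ({..<?n} - S)) (gl[t := gshift (gl ! t) k])))"
      by (subst (2) sum.swap, subst sum.swap, rule refl)
    also have "\<dots> = (\<Sum>S\<in>?P. pl C (nths v S) fl * pl C (a # nths v ({..<?n} - S)) gl)"
      by (simp add: sum_distrib_left)
    finally show ?thesis .
  qed
  have "pl C (a # v) (fl @ gl) = (\<Sum>S\<in>?P. pl C (nths v S) fl * pl C (a # nths v ({..<?n} - S)) gl)
     + (\<Sum>S\<in>?P. pl C (a # nths v S) fl * pl C (nths v ({..<?n} - S)) gl)"
    using L1 L2 by (simp add: sum_lessThan_add)
  also have "\<dots> = (\<Sum>S\<in>Pow {..<length (a # v)}.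
      pl C (nths (a # v) S) fl * pl C (nths (a # v) ({..<length (a # v)} - S)) gl)"
    unfolding length_Cons sum_Pow_Suc
    by (intro arg_cong2[where f="(+)"] sum.cong refl)
       (auto simp: nths_Suc_image nths_insert0_Suc_image compl_Suc_image compl_insert0_Suc_image)
  finally show ?case .
qed

definition p0 :: "('n::finite \<Rightarrow> 'n \<Rightarrow> 'n \<Rightarrow> 'k::field) \<Rightarrow> 'n list \<Rightarrow> 'n gvar multiset \<Rightarrow> 'k" where
  "p0 C w f = pl C w (SOME fl. mset fl = f)"

lemma p0_mset: "p0 C w (mset fl) = pl C w fl"
proof -
  have "mset (SOME gl. mset gl = mset fl) = mset fl"
    by (rule someI_ex) blast
  then show ?thesis unfolding p0_def by (rule pl_mset)
qed

lemma mult_if1[simp]: "(a::'a::semiring_1) * (if P then 1 else 0) = (if P then a else 0)" by simp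

lemma pl1_vals[simp]:
  "pl C [a] [G i j] = C i a j" "pl C [a] [Gb i j] = - C i a j"
  by (simp_all add: epsl_def)

lemma pl2_vals[simp]:
  "pl C [a, b] [G i j] = (\<Sum>k\<in>UNIV. C i a k * C k b j)"
  "pl C [a, b] [Gb i j] = (\<Sum>k\<in>UNIV. C k a j * C i b k)"
  by (simp_all add: epsl_def)

lemma pl_one_Cons:
  fixes C :: "'n::finite \<Rightarrow> 'n \<Rightarrow> 'n \<Rightarrow> 'k::field"
  shows "pl C [a] (x # gl) = pl C [a] [x] * epsl gl + epsl [x] * pl C [a] gl"
  using pl_delta_U[of C "[a]" "[x]" gl] by (simp add: lessThan_Suc Pow_insert del: pl.simps(2))

lemma pl_two_Cons:
  fixes C :: "'n::finite \<Rightarrow> 'n \<Rightarrow> 'n \<Rightarrow> 'k::field"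
  shows "pl C [a, b] (x # gl) = pl C [a, b] [x] * epsl gl + pl C [a] [x] * pl C [b] gl
     + pl C [b] [x] * pl C [a] gl + epsl [x] * pl C [a, b] gl"
  using pl_delta_U[of C "[a, b]" "[x]" gl]
  by (simp add: lessThan_Suc numeral_2_eq_2 Pow_insert nths_Cons insert_Diff_if del: pl.simps(2))

lemma leib_G:
  assumes "leibniz_consts C"
  shows "(\<Sum>k\<in>UNIV. C i a k * C k b j) = (\<Sum>m\<in>UNIV. C m a b * C i m j) + (\<Sum>k\<in>UNIV. C i b k * C k a j)"
proof -
  have "(\<Sum>m\<in>UNIV. C m b j * C i a m) = (\<Sum>m\<in>UNIV. C m a b * C i m j) + (\<Sum>m\<in>UNIV. C m a j * C i b m)"
    using assms unfolding leibniz_consts_def by blast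
  then show ?thesis by (simp add: mult.commute)
qed

lemma comm_single:
  assumes "leibniz_consts C"
  shows "pl C [a, b] [x] - pl C [b, a] [x] = (\<Sum>m\<in>UNIV. C m a b * pl C [m] [x])"
proof (cases x)
  case (G i j)
  then show ?thesis using leib_G[OF assms, of i a b j] by (simp del: pl.simps(2))
next
  case (Gb i j)
  have "(\<Sum>k\<in>UNIV. C k a j * C i b k) = (\<Sum>k\<in>UNIV. C i b k * C k a j)"
       "(\<Sum>k\<in>UNIV. C k b j * C i a k) = (\<Sum>k\<in>UNIV. C i a k * C k b j)"
    by (simp_all add: mult.commute)
  then show ?thesis using Gb leib_G[OF assms, of i a b j] by (simp add: sum_negf del: pl.simps(2))
qed

lemma comm_two:
  fixes C :: "'n::finite \<Rightarrow> 'n \<Rightarrow> 'n \<Rightarrow> 'k::field"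
  assumes "leibniz_consts C"
  shows "pl C [a, b] gl - pl C [b, a] gl = (\<Sum>m\<in>UNIV. C m a b * pl C [m] gl)"
proof (induction gl)
  case Nil
  then show ?case by simp
next
  case (Cons x gl)
  have "pl C [a, b] (x # gl) - pl C [b, a] (x # gl)
     = (pl C [a, b] [x] - pl C [b, a] [x]) * epsl gl + epsl [x] * (pl C [a, b] gl - pl C [b, a] gl)"
    unfolding pl_two_Cons[of C a b x gl] pl_two_Cons[of C b a x gl] by (simp add: algebra_simps)
  also have "\<dots> = (\<Sum>m\<in>UNIV. C m a b * pl C [m] [x]) * epsl gl + epsl [x] * (\<Sum>m\<in>UNIV. C m a b * pl C [m] gl)"
    using Cons comm_single[OF assms] by simp
  also have "\<dots> = (\<Sum>m\<in>UNIV. C m a b * pl C [m] (x # gl))"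
    unfolding pl_one_Cons[of C _ x gl]
    by (simp add: sum_distrib_left sum_distrib_right sum.distrib algebra_simps del: pl.simps(2))
  finally show ?case .
qed

lemma comm_gen:
  fixes C :: "'n::finite \<Rightarrow> 'n \<Rightarrow> 'n \<Rightarrow> 'k::field"
  assumes "leibniz_consts C"
  shows "pl C (u @ [a, b] @ v) fl - pl C (u @ [b, a] @ v) fl - (\<Sum>m\<in>UNIV. C m a b * pl C (u @ [m] @ v) fl) = 0"
proof -
  have inner: "pl C ([a, b] @ v) gl - pl C ([b, a] @ v) gl = (\<Sum>m\<in>UNIV. C m a b * pl C ([m] @ v) gl)" for gl
  proof -
    let ?L = "{ks. length ks = length gl}"
    have "pl C ([a, b] @ v) gl - pl C ([b, a] @ v) gl = (\<Sum>ks\<in>?L. (pl C [a, b] (map2 left_part gl ks) - pl C [b, a] (map2 left_part gl ks)) * pl C v (map2 right_part gl ks))"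
      unfolding pl_delta_O[of C "[a, b]" v gl] pl_delta_O[of C "[b, a]" v gl]
      by (simp add: sum_subtractf left_diff_distrib del: pl.simps(2))
    also have "\<dots> = (\<Sum>ks\<in>?L. \<Sum>m\<in>UNIV. C m a b * (pl C [m] (map2 left_part gl ks) * pl C v (map2 right_part gl ks)))"
      by (simp add: comm_two[OF assms] sum_distrib_right mult.assoc del: pl.simps(2))
    also have "\<dots> = (\<Sum>m\<in>UNIV. C m a b * pl C ([m] @ v) gl)"
      unfolding pl_delta_O[of C "[m]" v gl for m]
      by (subst sum.swap) (simp add: sum_distrib_left del: pl.simps(2))
    finally show ?thesis .
  qed
  let ?L = "{ks. length ks = length fl}"
  have "pl C (u @ [a, b] @ v) fl - pl C (u @ [b, a] @ v) fl = (\<Sum>ks\<in>?L. pl C u (map2 left_part fl ks) * (pl C ([a, b] @ v) (map2 right_part fl ks) - pl C ([b, a] @ v) (map2 right_part fl ks)))"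
    unfolding pl_delta_O[of C u "[a, b] @ v" fl] pl_delta_O[of C u "[b, a] @ v" fl]
    by (simp add: sum_subtractf right_diff_distrib del: pl.simps(2) append.simps)
  also have "\<dots> = (\<Sum>ks\<in>?L. \<Sum>m\<in>UNIV. C m a b * (pl C u (map2 left_part fl ks) * pl C ([m] @ v) (map2 right_part fl ks)))"
    unfolding inner by (simp add: sum_distrib_left mult.left_commute del: pl.simps(2) append.simps)
  also have "\<dots> = (\<Sum>m\<in>UNIV. C m a b * pl C (u @ [m] @ v) fl)"
    unfolding pl_delta_O[of C u "[m] @ v" fl for m]
    by (subst sum.swap) (simp add: sum_distrib_left del: pl.simps(2) append.simps)
  finally show ?thesis by simp
qed

lemma if_and0: "(if P \<and> Q then x else 0) = (if P then (if Q then x else 0) else 0)"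
  by simp

lemma sum_if_const: "(\<Sum>m\<in>A. if P then f m else 0) = (if P then (\<Sum>m\<in>A. f m) else 0)"
  by simp

lemma mult_if0: "(a::'a::semiring_0) * (if P then x else 0) = (if P then a * x else 0)"
  by simp

lemma pl_Cons2:
  "pl C (a # v) [x, y] = (\<Sum>k\<in>UNIV. gcoef C a x k * pl C v [gshift x k, y]) + (\<Sum>k\<in>UNIV. gcoef C a y k * pl C v [x, gshift y k])"
  by (simp add: lessThan_Suc numeral_2_eq_2)

lemma rel1:
  fixes C :: "'n::finite \<Rightarrow> 'n \<Rightarrow> 'n \<Rightarrow> 'k::field"
  assumes L: "leibniz_consts C"
  shows "(\<Sum>l\<in>UNIV. \<Sum>m\<in>UNIV. C k l m * pl C w [G l i, G m j]) = (\<Sum>r\<in>UNIV. C r i j * pl C w [G k r])"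
proof (induction w arbitrary: k)
  case Nil
  then show ?case by (simp add: epsl_def if_and0 mult_if0 sum_if_const)
next
  case (Cons a v)
  define X where "X c m = pl C v [G c i, G m j]" for c m
  have T1: "(\<Sum>l\<in>UNIV. \<Sum>m\<in>UNIV. C k l m * (\<Sum>c\<in>UNIV. C l a c * X c m))
      = (\<Sum>c\<in>UNIV. \<Sum>m\<in>UNIV. (\<Sum>l\<in>UNIV. C l a c * C k l m) * X c m)"
    apply (simp add: sum_distrib_left sum_distrib_right mult_ac)
    apply (subst sum.swap)
    apply (subst (2) sum.swap)
    apply (subst sum.swap)
    apply (rule refl)
    done
  have T2: "(\<Sum>l\<in>UNIV. \<Sum>m\<in>UNIV. C k l m * (\<Sum>c\<in>UNIV. C m a c * X l c))
      = (\<Sum>c\<in>UNIV. \<Sum>m\<in>UNIV. (\<Sum>l\<in>UNIV. C l a m * C k c l) * X c m)"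
    apply (simp add: sum_distrib_left sum_distrib_right mult_ac)
    apply (subst sum.swap)
    apply (rule refl)
    done
  have LB: "(\<Sum>l\<in>UNIV. C l a c * C k l m) + (\<Sum>l\<in>UNIV. C l a m * C k c l) = (\<Sum>l\<in>UNIV. C l c m * C k a l)" for c m
    using L unfolding leibniz_consts_def by metis
  have "(\<Sum>l\<in>UNIV. \<Sum>m\<in>UNIV. C k l m * pl C (a # v) [G l i, G m j])
     = (\<Sum>l\<in>UNIV. \<Sum>m\<in>UNIV. C k l m * (\<Sum>c\<in>UNIV. C l a c * X c m))
       + (\<Sum>l\<in>UNIV. \<Sum>m\<in>UNIV. C k l m * (\<Sum>c\<in>UNIV. C m a c * X l c))"
    by (simp add: pl_Cons2 X_def distrib_left sum.distrib del: pl.simps)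
  also have "\<dots> = (\<Sum>c\<in>UNIV. \<Sum>m\<in>UNIV. (\<Sum>l\<in>UNIV. C l c m * C k a l) * X c m)"
    unfolding T1 T2 LB[symmetric] by (simp add: sum.distrib distrib_right)
  also have "\<dots> = (\<Sum>l\<in>UNIV. C k a l * (\<Sum>c\<in>UNIV. \<Sum>m\<in>UNIV. C l c m * X c m))"
    apply (simp add: sum_distrib_left sum_distrib_right mult_ac)
    apply (subst sum.swap, rule sum.cong[OF refl], rule sum.swap)
    done
  also have "\<dots> = (\<Sum>l\<in>UNIV. C k a l * (\<Sum>r\<in>UNIV. C r i j * pl C v [G l r]))"
    unfolding X_def Cons.IH by (rule refl)
  also have "\<dots> = (\<Sum>r\<in>UNIV. C r i j * pl C (a # v) [G k r])"
    apply (simp add: sum_distrib_left mult_ac epsl_def)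
    apply (subst sum.swap)
    apply (rule refl)
    done
  finally show ?case .
qed

lemma rel2:
  fixes C :: "'n::finite \<Rightarrow> 'n \<Rightarrow> 'n \<Rightarrow> 'k::field"
  shows "(\<Sum>k\<in>UNIV. pl C w [G i k, Gb k j]) = (if i = j then pl C w [] else 0)"
proof (induction w arbitrary: i j)
  case Nil
  then show ?case by (simp add: epsl_def if_and0)
next
  case (Cons a v)
  have e: "pl C (a # v) [G i k, Gb k j] = (\<Sum>c\<in>UNIV. C i a c * pl C v [G c k, Gb k j]) - (\<Sum>c\<in>UNIV. C c a j * pl C v [G i k, Gb k c])" for k
    by (simp add: pl_Cons2 sum_negf del: pl.simps)
  have s1: "(\<Sum>k\<in>UNIV. \<Sum>c\<in>UNIV. C i a c * pl C v [G c k, Gb k j]) = (\<Sum>c\<in>UNIV. \<Sum>k\<in>UNIV. C i a c * pl C v [G c k, Gb k j])"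
    by (rule sum.swap)
  have s2: "(\<Sum>k\<in>UNIV. \<Sum>c\<in>UNIV. C c a j * pl C v [G i k, Gb k c]) = (\<Sum>c\<in>UNIV. \<Sum>k\<in>UNIV. C c a j * pl C v [G i k, Gb k c])"
    by (rule sum.swap)
  have "(\<Sum>k\<in>UNIV. pl C (a # v) [G i k, Gb k j])
     = (\<Sum>c\<in>UNIV. C i a c * (\<Sum>k\<in>UNIV. pl C v [G c k, Gb k j])) - (\<Sum>c\<in>UNIV. C c a j * (\<Sum>k\<in>UNIV. pl C v [G i k, Gb k c]))"
    unfolding e sum_subtractf s1 s2 by (simp add: sum_distrib_left)
  also have "\<dots> = 0" unfolding Cons.IH by (simp add: if_distrib cong: if_cong)
  finally show ?case by simp
qed

lemma rel3:
  fixes C :: "'n::finite \<Rightarrow> 'n \<Rightarrow> 'n \<Rightarrow> 'k::field"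
  shows "(\<Sum>k\<in>UNIV. pl C w [Gb i k, G k j]) = (if i = j then pl C w [] else 0)"
proof (cases w)
  case Nil
  then show ?thesis by (simp add: epsl_def if_and0)
next
  case (Cons a v)
  have "(\<Sum>k\<in>UNIV. pl C (a # v) [Gb i k, G k j])
     = (\<Sum>k\<in>UNIV. \<Sum>c\<in>UNIV. C k a c * pl C v [Gb i k, G c j]) - (\<Sum>k\<in>UNIV. \<Sum>c\<in>UNIV. C c a k * pl C v [Gb i c, G k j])"
    by (simp add: pl_Cons2 sum.distrib sum_negf sum_subtractf del: pl.simps)
  also have "\<dots> = 0"
    by (subst (2) sum.swap) simp
  finally show ?thesis using Cons by simp
qed

lemma swap3: "(\<Sum>l\<in>A. \<Sum>m\<in>B. \<Sum>s\<in>D. f l m s) = (\<Sum>s\<in>D. \<Sum>l\<in>A. \<Sum>m\<in>B. f l m s)"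
proof -
  have "(\<Sum>l\<in>A. \<Sum>m\<in>B. \<Sum>s\<in>D. f l m s) = (\<Sum>l\<in>A. \<Sum>s\<in>D. \<Sum>m\<in>B. f l m s)"
    by (rule sum.cong[OF refl], rule sum.swap)
  also have "\<dots> = (\<Sum>s\<in>D. \<Sum>l\<in>A. \<Sum>m\<in>B. f l m s)"
    by (rule sum.swap)
  finally show ?thesis .
qed

lemma ex_list: "\<exists>fl. f = mset fl"
  by (metis ex_mset)

lemma p0_hopf:
  fixes C :: "'n::finite \<Rightarrow> 'n \<Rightarrow> 'n \<Rightarrow> 'k::field"
  assumes L: "leibniz_consts C"
  shows "hopf_pairing C (p0 C)"
  unfolding hopf_pairing_def
proof (intro conjI)
  show "vanishes_U C (p0 C)"
    unfolding vanishes_U_def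
  proof (intro allI)
    fix u v a b and f :: "'n gvar multiset"
    obtain fl where f: "f = mset fl" using ex_list by blast
    show "p0 C (u @ [a, b] @ v) f - p0 C (u @ [b, a] @ v) f - (\<Sum>m\<in>UNIV. C m a b * p0 C (u @ [m] @ v) f) = 0"
      unfolding f p0_mset by (rule comm_gen[OF L])
  qed
  show "vanishes_O C (p0 C)"
    unfolding vanishes_O_def
  proof (intro allI conjI)
    fix w :: "'n list" and f :: "'n gvar multiset"
    obtain fl where f: "f = mset fl" using ex_list by blast
    let ?P = "Pow {..<length w}"
    let ?B = "\<lambda>S. pl C (nths w ({..<length w} - S)) fl"
    let ?A = "\<lambda>S. nths w S"
    have m2: "mset fl + {#x, y#} = mset ([x, y] @ fl)" for x y by simp
    have m1: "mset fl + {#x#} = mset ([x] @ fl)" for x by simp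
    fix k i j
    have a: "(\<Sum>l\<in>UNIV. \<Sum>m\<in>UNIV. C k l m * pl C w ([G l i, G m j] @ fl))
       = (\<Sum>S\<in>?P. (\<Sum>l\<in>UNIV. \<Sum>m\<in>UNIV. C k l m * pl C (?A S) [G l i, G m j]) * ?B S)"
      unfolding pl_delta_U[of C w "[G l i, G m j]" fl for l m]
      by (simp add: sum_distrib_left sum_distrib_right mult.assoc del: pl.simps(2)) (rule swap3)
    have b: "(\<Sum>r\<in>UNIV. C r i j * pl C w ([G k r] @ fl))
       = (\<Sum>S\<in>?P. (\<Sum>r\<in>UNIV. C r i j * pl C (?A S) [G k r]) * ?B S)"
      unfolding pl_delta_U[of C w "[G k r]" fl for r]
      by (simp add: sum_distrib_left sum_distrib_right mult.assoc del: pl.simps(2)) (rule sum.swap)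
    show "(\<Sum>l\<in>UNIV. \<Sum>m\<in>UNIV. C k l m * p0 C w (f + {#G l i, G m j#})) -
          (\<Sum>r\<in>UNIV. C r i j * p0 C w (f + {#G k r#})) = 0"
      unfolding f m2 m1 p0_mset a b rel1[OF L] by simp
  next
    fix w :: "'n list" and f :: "'n gvar multiset"
    obtain fl where f: "f = mset fl" using ex_list by blast
    let ?P = "Pow {..<length w}"
    let ?B = "\<lambda>S. pl C (nths w ({..<length w} - S)) fl"
    let ?A = "\<lambda>S. nths w S"
    have m2: "mset fl + {#x, y#} = mset ([x, y] @ fl)" for x y by simp
    fix i j
    have a: "(\<Sum>k\<in>UNIV. pl C w ([G i k, Gb k j] @ fl))
       = (\<Sum>S\<in>?P. (\<Sum>k\<in>UNIV. pl C (?A S) [G i k, Gb k j]) * ?B S)"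
      unfolding pl_delta_U[of C w "[G i k, Gb k j]" fl for k]
      by (simp add: sum_distrib_right del: pl.simps(2)) (rule sum.swap)
    have b: "(\<Sum>S\<in>?P. pl C (?A S) [] * ?B S) = pl C w ([] @ fl)"
      unfolding pl_delta_U[of C w "[]" fl] by (rule refl)
    show "(\<Sum>k\<in>UNIV. p0 C w (f + {#G i k, Gb k j#})) - (if i = j then p0 C w f else 0) = 0"
      unfolding f m2 p0_mset a rel2 using b by (simp add: if_distrib sum_if_const cong: if_cong)
  next
    fix w :: "'n list" and f :: "'n gvar multiset"
    obtain fl where f: "f = mset fl" using ex_list by blast
    let ?P = "Pow {..<length w}"
    let ?B = "\<lambda>S. pl C (nths w ({..<length w} - S)) fl"
    let ?A = "\<lambda>S. nths w S"
    have m2: "mset fl + {#x, y#} = mset ([x, y] @ fl)" for x y by simp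
    fix i j
    have a: "(\<Sum>k\<in>UNIV. pl C w ([Gb i k, G k j] @ fl))
       = (\<Sum>S\<in>?P. (\<Sum>k\<in>UNIV. pl C (?A S) [Gb i k, G k j]) * ?B S)"
      unfolding pl_delta_U[of C w "[Gb i k, G k j]" fl for k]
      by (simp add: sum_distrib_right del: pl.simps(2)) (rule sum.swap)
    have b: "(\<Sum>S\<in>?P. pl C (?A S) [] * ?B S) = pl C w ([] @ fl)"
      unfolding pl_delta_U[of C w "[]" fl] by (rule refl)
    show "(\<Sum>k\<in>UNIV. p0 C w (f + {#Gb i k, G k j#})) - (if i = j then p0 C w f else 0) = 0"
      unfolding f m2 p0_mset a rel3 using b by (simp add: if_distrib sum_if_const cong: if_cong)
  qed
  show "delta_U_cond (p0 C)"
    unfolding delta_U_cond_def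
  proof (intro allI)
    fix w :: "'n list" and f g :: "'n gvar multiset"
    obtain fl where f: "f = mset fl" using ex_list by blast
    obtain gl where g: "g = mset gl" using ex_list by blast
    show "p0 C w (f + g) = (\<Sum>S\<in>Pow {..<length w}. p0 C (nths w S) f * p0 C (nths w ({..<length w} - S)) g)"
      unfolding f g mset_append[symmetric] p0_mset by (rule pl_delta_U)
  qed
  show "eps_U_cond (p0 C)"
    unfolding eps_U_cond_def
  proof
    fix w :: "'n list"
    show "p0 C w {#} = (if w = [] then 1 else 0)"
      using p0_mset[of C w "[]"] by (cases w) auto
  qed
  show "delta_O_cond (p0 C)"
    unfolding delta_O_cond_def p0_mset by (intro allI) (rule pl_delta_O)
  show "eps_O_cond (p0 C)"
    unfolding eps_O_cond_def
  proof
    fix f :: "'n gvar multiset"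
    obtain fl where f: "f = mset fl" using ex_list by blast
    show "p0 C [] f = (if \<forall>x\<in>#f. gdiag x then 1 else 0)"
      unfolding f p0_mset by (simp add: epsl_def)
  qed
qed

lemma p0_gen: "pairs_generators C (p0 C)"
  unfolding pairs_generators_def using p0_mset[of C _ "[G _ _]"] by (simp del: pl.simps(2))

lemma delta1:
  assumes "delta_U_cond p"
  shows "p [a] (f + g) = p [] f * p [a] g + p [a] f * p [] g"
  using assms unfolding delta_U_cond_def
  by (simp add: lessThan_Suc Pow_insert)

lemma uniq:
  fixes C :: "'n::finite \<Rightarrow> 'n \<Rightarrow> 'n \<Rightarrow> 'k::field"
  assumes H: "hopf_pairing C p" and Gen: "pairs_generators C p"
  shows "p w (mset fl) = pl C w fl"
proof -
  have vO: "vanishes_O C p" and dU: "delta_U_cond p" and eU: "eps_U_cond p"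
    and dO: "delta_O_cond p" and eO: "eps_O_cond p"
    using H unfolding hopf_pairing_def by auto
  have p_nil: "p [] (mset gl) = epsl gl" for gl
    using eO unfolding eps_O_cond_def epsl_def by simp
  have p_empty: "p [a] {#} = 0" for a
    using eU unfolding eps_U_cond_def by simp
  have pG: "p [a] {#G i j#} = C i a j" for a i j
    using Gen unfolding pairs_generators_def by simp
  have pGb: "p [a] {#Gb i j#} = - C i a j" for a i j
  proof -
    have "(\<Sum>k\<in>UNIV. p [a] ({#} + {#G i k, Gb k j#})) - (if i = j then p [a] {#} else 0) = 0"
      using vO unfolding vanishes_O_def by blast
    then have "(\<Sum>k\<in>UNIV. p [a] ({#G i k#} + {#Gb k j#})) = 0"
      by (simp add: p_empty add_mset_commute)
    moreover have "p [a] ({#G i k#} + {#Gb k j#}) = (if i = k then p [a] {#Gb k j#} else 0) + (if k = j then C i a k else 0)" for k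
      using delta1[OF dU, of a "{#G i k#}" "{#Gb k j#}"] p_nil[of "[G i k]"] p_nil[of "[Gb k j]"]
      by (simp add: pG epsl_def)
    ultimately have "(\<Sum>k\<in>UNIV. (if i = k then p [a] {#Gb k j#} else 0) + (if k = j then C i a k else 0)) = 0"
      by simp
    then show ?thesis by (simp add: sum.distrib eq_neg_iff_add_eq_0)
  qed
  have single: "p [a] (mset gl) = pl C [a] gl" for a gl
  proof (induction gl)
    case Nil
    then show ?case using p_empty by simp
  next
    case (Cons x gl)
    have "p [a] (mset (x # gl)) = p [a] ({#x#} + mset gl)" by simp
    also have "\<dots> = p [] {#x#} * p [a] (mset gl) + p [a] {#x#} * p [] (mset gl)"
      by (rule delta1[OF dU])
    also have "\<dots> = epsl [x] * pl C [a] gl + pl C [a] [x] * epsl gl"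
      using p_nil[of "[x]"] p_nil[of gl] Cons.IH
      by (cases x) (simp_all add: pG pGb del: pl.simps(2))
    also have "\<dots> = pl C [a] (x # gl)"
      by (simp add: pl_one_Cons[of C a x gl] del: pl.simps(2))
    finally show ?case .
  qed
  show ?thesis
  proof (induction w arbitrary: fl)
    case Nil
    then show ?case by (simp add: p_nil)
  next
    case (Cons a v)
    have "p ([a] @ v) (mset fl) = (\<Sum>ks\<in>{ks. length ks = length fl}.
        p [a] (mset (map2 left_part fl ks)) * p v (mset (map2 right_part fl ks)))"
      using dO unfolding delta_O_cond_def by blast
    also have "\<dots> = pl C ([a] @ v) fl"
      unfolding pl_delta_O single Cons.IH by (rule refl)
    finally show ?case by simp
  qed
qed

lemma lists_Suc_eq: "{xs. length xs = Suc n} = (\<lambda>(x, xs). x # xs) ` (UNIV \<times> {xs. length xs = n})"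
  by (auto simp: length_Suc_conv image_iff)

lemma sum_lists_Suc:
  "(\<Sum>xs\<in>{xs::('a::finite) list. length xs = Suc n}. F xs) = (\<Sum>x\<in>UNIV. \<Sum>xs\<in>{xs. length xs = n}. F (x # xs))"
proof -
  have "inj_on (\<lambda>(x, xs). x # xs) (UNIV \<times> {xs::'a list. length xs = n})"
    by (auto simp: inj_on_def)
  then show ?thesis
    unfolding lists_Suc_eq by (simp add: sum.reindex sum.cartesian_product split_def)
qed

lemma sum_prod_lists:
  "(\<Sum>xs\<in>{xs::('a::finite) list. length xs = n}. \<Prod>t<n. f t (xs ! t)) = (\<Prod>t<n. \<Sum>x\<in>UNIV. (f t x :: 'b::comm_semiring_1))"
proof (induction n arbitrary: f)
  case 0
  then show ?case by simp
next
  case (Suc n)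
  have "(\<Sum>xs\<in>{xs::'a list. length xs = Suc n}. \<Prod>t<Suc n. f t (xs ! t))
      = (\<Sum>x\<in>UNIV. \<Sum>xs\<in>{xs::'a list. length xs = n}. f 0 x * (\<Prod>t<n. f (Suc t) (xs ! t)))"
    unfolding sum_lists_Suc prod.lessThan_Suc_shift by simp
  also have "\<dots> = (\<Sum>x\<in>UNIV. f 0 x) * (\<Prod>t<n. \<Sum>x\<in>UNIV. f (Suc t) x)"
    using Suc.IH[of "\<lambda>t x. f (Suc t) x"] by (simp add: sum_distrib_left[symmetric] sum_distrib_right)
  also have "\<dots> = (\<Prod>t<Suc n. \<Sum>x\<in>UNIV. f t x)"
    unfolding prod.lessThan_Suc_shift by simp
  finally show ?case .
qed

lemma split_at:
  assumes s: "s < n"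
  shows "(\<Sum>xs\<in>{xs::('a::finite) list. length xs = n}. F xs)
       = (\<Sum>xs\<in>{xs. length xs = n \<and> xs ! s = y0}. \<Sum>y\<in>UNIV. F (xs[s := y]))"
proof -
  let ?D = "{xs::'a list. length xs = n \<and> xs ! s = y0}"
  let ?h = "\<lambda>(xs, y). xs[s := y]"
  have bij: "bij_betw ?h (?D \<times> (UNIV::'a set)) {xs. length xs = n}"
  proof (rule bij_betwI')
    fix p q assume "p \<in> ?D \<times> (UNIV::'a set)" "q \<in> ?D \<times> (UNIV::'a set)"
    then obtain xs y xs' y' where pq: "p = (xs, y)" "q = (xs', y')" "length xs = n" "xs ! s = y0"
      "length xs' = n" "xs' ! s = y0" by auto
    show "(?h p = ?h q) = (p = q)"
    proof
      assume eq: "?h p = ?h q"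
      then have e: "xs[s := y] = xs'[s := y']" using pq by simp
      then have "y = y'" using s pq by (metis nth_list_update_eq)
      moreover have "xs = xs'"
      proof (rule nth_equalityI)
        show "length xs = length xs'" using pq by simp
        fix t assume "t < length xs"
        show "xs ! t = xs' ! t"
        proof (cases "t = s")
          case True then show ?thesis using pq by simp
        next
          case False then show ?thesis using e by (metis nth_list_update_neq)
        qed
      qed
      ultimately show "p = q" using pq by simp
    qed simp
  next
    fix p assume "p \<in> ?D \<times> (UNIV::'a set)" then show "?h p \<in> {xs. length xs = n}" by auto
  next
    fix zs assume z: "zs \<in> {xs::'a list. length xs = n}"
    show "\<exists>p\<in>?D \<times> (UNIV::'a set). zs = ?h p"
      by (rule bexI[of _ "(zs[s := y0], zs ! s)"]) (use z s in auto)
  qed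
  have "(\<Sum>xs\<in>?D. \<Sum>y\<in>UNIV. F (xs[s := y])) = (\<Sum>p\<in>?D \<times> (UNIV::'a set). F (?h p))"
    by (simp add: sum.cartesian_product split_def)
  also have "\<dots> = (\<Sum>xs\<in>{xs. length xs = n}. F xs)"
    by (rule sum.reindex_bij_betw[OF bij])
  finally show ?thesis by simp
qed

lemma prod_upd:
  assumes "s < n" "length xs = n"
  shows "(\<Prod>t<n. f t (xs[s := y] ! t)) = f s y * (\<Prod>t\<in>{..<n} - {s}. f t (xs ! t))"
proof -
  have "(\<Prod>t<n. f t (xs[s := y] ! t)) = f s (xs[s := y] ! s) * (\<Prod>t\<in>{..<n} - {s}. f t (xs[s := y] ! t))"
    using assms by (subst prod.remove[of _ s]) auto
  also have "(\<Prod>t\<in>{..<n} - {s}. f t (xs[s := y] ! t)) = (\<Prod>t\<in>{..<n} - {s}. f t (xs ! t))"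
    by (rule prod.cong) auto
  finally show ?thesis using assms by simp
qed

lemma sum_pairs: "(\<Sum>y\<in>(UNIV::('a::finite \<times> 'b::finite) set). f y) = (\<Sum>\<alpha>\<in>UNIV. \<Sum>\<gamma>\<in>UNIV. f (\<alpha>, \<gamma>))"
  by (simp add: UNIV_Times_UNIV[symmetric] sum.cartesian_product del: UNIV_Times_UNIV)

lemma swap_in3: "(\<Sum>k\<in>A. \<Sum>b\<in>B. \<Sum>c\<in>D. f k b c) = (\<Sum>b\<in>B. \<Sum>c\<in>D. \<Sum>k\<in>A. f k b c)"
proof -
  have "(\<Sum>k\<in>A. \<Sum>b\<in>B. \<Sum>c\<in>D. f k b c) = (\<Sum>b\<in>B. \<Sum>k\<in>A. \<Sum>c\<in>D. f k b c)"
    by (rule sum.swap)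
  also have "\<dots> = (\<Sum>b\<in>B. \<Sum>c\<in>D. \<Sum>k\<in>A. f k b c)"
    by (rule sum.cong[OF refl], rule sum.swap)
  finally show ?thesis .
qed

lemma swap_in4: "(\<Sum>k\<in>A. \<Sum>b\<in>B. \<Sum>c\<in>D. \<Sum>m\<in>E. f k b c m) = (\<Sum>b\<in>B. \<Sum>c\<in>D. \<Sum>m\<in>E. \<Sum>k\<in>A. f k b c m)"
proof -
  have "(\<Sum>k\<in>A. \<Sum>b\<in>B. \<Sum>c\<in>D. \<Sum>m\<in>E. f k b c m) = (\<Sum>b\<in>B. \<Sum>k\<in>A. \<Sum>c\<in>D. \<Sum>m\<in>E. f k b c m)"
    by (rule sum.swap)
  also have "\<dots> = (\<Sum>b\<in>B. \<Sum>c\<in>D. \<Sum>m\<in>E. \<Sum>k\<in>A. f k b c m)"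
    by (rule sum.cong[OF refl], rule swap_in3)
  finally show ?thesis .
qed

lemma M1:
  fixes P Q :: "'n::finite \<Rightarrow> 'n \<Rightarrow> 'k::field"
  assumes PQ: "\<And>i j. (\<Sum>k\<in>UNIV. P i k * Q k j) = (if i = j then 1 else 0)"
  shows "(\<Sum>k\<in>UNIV. change_consts P Q C i a k * Q k \<alpha>) = (\<Sum>b\<in>UNIV. \<Sum>m\<in>UNIV. Q i m * C m b \<alpha> * P b a)"
proof -
  have "(\<Sum>k\<in>UNIV. change_consts P Q C i a k * Q k \<alpha>)
     = (\<Sum>k\<in>UNIV. \<Sum>b\<in>UNIV. \<Sum>c\<in>UNIV. \<Sum>m\<in>UNIV. Q i m * C m b c * P b a * (P c k * Q k \<alpha>))"
    unfolding change_consts_def by (simp add: sum_distrib_right mult.assoc)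
  also have "\<dots> = (\<Sum>b\<in>UNIV. \<Sum>c\<in>UNIV. \<Sum>m\<in>UNIV. \<Sum>k\<in>UNIV. Q i m * C m b c * P b a * (P c k * Q k \<alpha>))"
    by (rule swap_in4)
  also have "\<dots> = (\<Sum>b\<in>UNIV. \<Sum>c\<in>UNIV. \<Sum>m\<in>UNIV. Q i m * C m b c * P b a * (if c = \<alpha> then 1 else 0))"
    by (simp add: sum_distrib_left[symmetric] PQ del: mult_if1)
  also have "\<dots> = (\<Sum>b\<in>UNIV. \<Sum>m\<in>UNIV. Q i m * C m b \<alpha> * P b a)"
    by (simp add: sum_if_const)
  finally show ?thesis .
qed

lemma M2:
  fixes P Q :: "'n::finite \<Rightarrow> 'n \<Rightarrow> 'k::field"
  assumes PQ: "\<And>i j. (\<Sum>k\<in>UNIV. P i k * Q k j) = (if i = j then 1 else 0)"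
  shows "(\<Sum>k\<in>UNIV. P \<gamma> k * change_consts P Q C k a j) = (\<Sum>b\<in>UNIV. \<Sum>c\<in>UNIV. C \<gamma> b c * P b a * P c j)"
proof -
  have "(\<Sum>k\<in>UNIV. P \<gamma> k * change_consts P Q C k a j)
     = (\<Sum>k\<in>UNIV. \<Sum>b\<in>UNIV. \<Sum>c\<in>UNIV. \<Sum>m\<in>UNIV. (P \<gamma> k * Q k m) * (C m b c * P b a * P c j))"
    unfolding change_consts_def by (simp add: sum_distrib_left mult_ac)
  also have "\<dots> = (\<Sum>b\<in>UNIV. \<Sum>c\<in>UNIV. \<Sum>m\<in>UNIV. \<Sum>k\<in>UNIV. (P \<gamma> k * Q k m) * (C m b c * P b a * P c j))"
    by (rule swap_in4)
  also have "\<dots> = (\<Sum>b\<in>UNIV. \<Sum>c\<in>UNIV. \<Sum>m\<in>UNIV. (if \<gamma> = m then 1 else 0) * (C m b c * P b a * P c j))"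
    by (simp add: sum_distrib_right[symmetric] PQ del: mult_if1)
  also have "\<dots> = (\<Sum>b\<in>UNIV. \<Sum>c\<in>UNIV. C \<gamma> b c * P b a * P c j)"
    by (simp add: if_distrib[of "\<lambda>x. x * _"] cong: if_cong)
  finally show ?thesis .
qed

lemma subst_var_gshift[simp]: "subst_var (gshift x k) y = subst_var x y"
  by (cases x; cases y) auto

lemma LOC:
  fixes P Q :: "'n::finite \<Rightarrow> 'n \<Rightarrow> 'k::field" and R :: "'n gvar \<Rightarrow> 'k"
  assumes PQ: "\<And>i j. (\<Sum>k\<in>UNIV. P i k * Q k j) = (if i = j then 1 else 0)"
  shows "(\<Sum>k\<in>UNIV. gcoef (change_consts P Q C) a x k * (\<Sum>y\<in>UNIV. subst_coef P Q (gshift x k) y * R (subst_var x y)))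
      = (\<Sum>a'\<in>UNIV. P a' a * (\<Sum>y\<in>UNIV. subst_coef P Q x y * (\<Sum>k\<in>UNIV. gcoef C a' (subst_var x y) k * R (gshift (subst_var x y) k))))"
proof (cases x)
  case (G i j)
  define W where "W \<alpha> = (\<Sum>\<gamma>\<in>UNIV. P \<gamma> j * R (G \<alpha> \<gamma>))" for \<alpha>
  have l1: "(\<Sum>y\<in>UNIV. subst_coef P Q (G k j) y * R (subst_var (G i j) y)) = (\<Sum>\<alpha>\<in>UNIV. Q k \<alpha> * W \<alpha>)" for k
    unfolding sum_pairs W_def by (simp add: sum_distrib_left mult.assoc)
  have "(\<Sum>k\<in>UNIV. gcoef (change_consts P Q C) a x k * (\<Sum>y\<in>UNIV. subst_coef P Q (gshift x k) y * R (subst_var x y)))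
      = (\<Sum>k\<in>UNIV. change_consts P Q C i a k * (\<Sum>\<alpha>\<in>UNIV. Q k \<alpha> * W \<alpha>))"
    using G l1 by simp
  also have "\<dots> = (\<Sum>\<alpha>\<in>UNIV. (\<Sum>k\<in>UNIV. change_consts P Q C i a k * Q k \<alpha>) * W \<alpha>)"
    by (simp add: sum_distrib_left sum_distrib_right mult.assoc) (rule sum.swap)
  also have "\<dots> = (\<Sum>\<alpha>\<in>UNIV. (\<Sum>b\<in>UNIV. \<Sum>m\<in>UNIV. Q i m * C m b \<alpha> * P b a) * W \<alpha>)"
    by (simp add: M1[OF PQ])
  finally have L: "(\<Sum>k\<in>UNIV. gcoef (change_consts P Q C) a x k * (\<Sum>y\<in>UNIV. subst_coef P Q (gshift x k) y * R (subst_var x y)))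
      = (\<Sum>\<alpha>\<in>UNIV. (\<Sum>b\<in>UNIV. \<Sum>m\<in>UNIV. Q i m * C m b \<alpha> * P b a) * W \<alpha>)" .
  have r1: "(\<Sum>y\<in>UNIV. subst_coef P Q (G i j) y * (\<Sum>k\<in>UNIV. gcoef C a' (subst_var (G i j) y) k * R (gshift (subst_var (G i j) y) k)))
     = (\<Sum>\<alpha>\<in>UNIV. Q i \<alpha> * (\<Sum>k\<in>UNIV. C \<alpha> a' k * W k))" for a'
  proof -
    have "(\<Sum>\<gamma>\<in>UNIV. P \<gamma> j * (\<Sum>k\<in>UNIV. C \<alpha> a' k * R (G k \<gamma>))) = (\<Sum>k\<in>UNIV. C \<alpha> a' k * W k)" for \<alpha>
      unfolding W_def by (simp add: sum_distrib_left mult_ac) (rule sum.swap)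
    then show ?thesis unfolding sum_pairs by (simp add: sum_distrib_left[symmetric] mult.assoc)
  qed
  have "(\<Sum>a'\<in>UNIV. P a' a * (\<Sum>y\<in>UNIV. subst_coef P Q x y * (\<Sum>k\<in>UNIV. gcoef C a' (subst_var x y) k * R (gshift (subst_var x y) k))))
     = (\<Sum>a'\<in>UNIV. P a' a * (\<Sum>\<alpha>\<in>UNIV. Q i \<alpha> * (\<Sum>k\<in>UNIV. C \<alpha> a' k * W k)))"
    using G r1 by simp
  also have "\<dots> = (\<Sum>k\<in>UNIV. (\<Sum>a'\<in>UNIV. \<Sum>\<alpha>\<in>UNIV. Q i \<alpha> * C \<alpha> a' k * P a' a) * W k)"
    by (simp add: sum_distrib_left sum_distrib_right mult_ac) (rule swap3)
  finally show ?thesis using L by (simp add: mult_ac)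
next
  case (Gb i j)
  define V where "V \<gamma> = (\<Sum>\<alpha>\<in>UNIV. Q i \<alpha> * R (Gb \<alpha> \<gamma>))" for \<gamma>
  have l1: "(\<Sum>y\<in>UNIV. subst_coef P Q (Gb i k) y * R (subst_var (Gb i j) y)) = (\<Sum>\<gamma>\<in>UNIV. P \<gamma> k * V \<gamma>)" for k
    unfolding sum_pairs V_def by (simp add: sum_distrib_left sum_distrib_right mult_ac) (rule sum.swap)
  have "(\<Sum>k\<in>UNIV. gcoef (change_consts P Q C) a x k * (\<Sum>y\<in>UNIV. subst_coef P Q (gshift x k) y * R (subst_var x y)))
      = - (\<Sum>k\<in>UNIV. change_consts P Q C k a j * (\<Sum>\<gamma>\<in>UNIV. P \<gamma> k * V \<gamma>))"
    using Gb l1 by (simp add: sum_negf)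
  also have "\<dots> = - (\<Sum>\<gamma>\<in>UNIV. (\<Sum>k\<in>UNIV. P \<gamma> k * change_consts P Q C k a j) * V \<gamma>)"
    by (simp add: sum_distrib_left sum_distrib_right mult_ac) (rule sum.swap)
  also have "\<dots> = - (\<Sum>\<gamma>\<in>UNIV. (\<Sum>b\<in>UNIV. \<Sum>c\<in>UNIV. C \<gamma> b c * P b a * P c j) * V \<gamma>)"
    by (simp add: M2[OF PQ])
  finally have L: "(\<Sum>k\<in>UNIV. gcoef (change_consts P Q C) a x k * (\<Sum>y\<in>UNIV. subst_coef P Q (gshift x k) y * R (subst_var x y)))
      = - (\<Sum>\<gamma>\<in>UNIV. (\<Sum>b\<in>UNIV. \<Sum>c\<in>UNIV. C \<gamma> b c * P b a * P c j) * V \<gamma>)" .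
  have r1: "(\<Sum>y\<in>UNIV. subst_coef P Q (Gb i j) y * (\<Sum>k\<in>UNIV. gcoef C a' (subst_var (Gb i j) y) k * R (gshift (subst_var (Gb i j) y) k)))
     = - (\<Sum>\<gamma>\<in>UNIV. P \<gamma> j * (\<Sum>k\<in>UNIV. C k a' \<gamma> * V k))" for a'
  proof -
    have "(\<Sum>\<alpha>\<in>UNIV. Q i \<alpha> * (\<Sum>k\<in>UNIV. C k a' \<gamma> * R (Gb \<alpha> k))) = (\<Sum>k\<in>UNIV. C k a' \<gamma> * V k)" for \<gamma>
      unfolding V_def by (simp add: sum_distrib_left mult_ac) (rule sum.swap)
    then have "(\<Sum>\<alpha>\<in>UNIV. \<Sum>\<gamma>\<in>UNIV. Q i \<alpha> * P \<gamma> j * (\<Sum>k\<in>UNIV. C k a' \<gamma> * R (Gb \<alpha> k)))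
       = (\<Sum>\<gamma>\<in>UNIV. P \<gamma> j * (\<Sum>k\<in>UNIV. C k a' \<gamma> * V k))"
      by (subst sum.swap) (simp add: sum_distrib_left[symmetric] mult_ac)
    then show ?thesis unfolding sum_pairs by (simp add: sum_negf mult.assoc)
  qed
  have "(\<Sum>a'\<in>UNIV. P a' a * (\<Sum>y\<in>UNIV. subst_coef P Q x y * (\<Sum>k\<in>UNIV. gcoef C a' (subst_var x y) k * R (gshift (subst_var x y) k))))
     = - (\<Sum>a'\<in>UNIV. P a' a * (\<Sum>\<gamma>\<in>UNIV. P \<gamma> j * (\<Sum>k\<in>UNIV. C k a' \<gamma> * V k)))"
    using Gb r1 by (simp add: sum_negf)
  also have "\<dots> = - (\<Sum>k\<in>UNIV. (\<Sum>a'\<in>UNIV. \<Sum>\<gamma>\<in>UNIV. C k a' \<gamma> * P a' a * P \<gamma> j) * V k)"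
    by (simp add: sum_distrib_left sum_distrib_right mult_ac) (rule swap3)
  finally show ?thesis using L by (simp add: mult_ac)
qed

definition AC :: "('n::finite \<Rightarrow> 'n \<Rightarrow> 'k::field) \<Rightarrow> ('n \<Rightarrow> 'n \<Rightarrow> 'k) \<Rightarrow> 'n gvar list \<Rightarrow> ('n gvar list \<Rightarrow> 'k) \<Rightarrow> 'k" where
  "AC P Q fl \<Phi> = (\<Sum>acs\<in>{acs. length acs = length fl}.
      (\<Prod>t<length fl. subst_coef P Q (fl ! t) (acs ! t)) * \<Phi> (map2 subst_var fl acs))"

definition TT :: "('n::finite \<Rightarrow> 'n \<Rightarrow> 'k::field) \<Rightarrow> ('n \<Rightarrow> 'n \<Rightarrow> 'k) \<Rightarrow> ('n \<Rightarrow> 'n \<Rightarrow> 'n \<Rightarrow> 'k) \<Rightarrow> 'n list \<Rightarrow> 'n gvar list \<Rightarrow> 'k" where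
  "TT P Q C w fl = (\<Sum>as\<in>{as. length as = length w}. (\<Prod>t<length w. P (as ! t) (w ! t)) * AC P Q fl (pl C as))"

lemma epsl_prod: "epsl xs = (\<Prod>t<length xs. if gdiag (xs ! t) then 1 else 0)"
proof (induction xs)
  case Nil then show ?case by simp
next
  case (Cons x xs)
  show ?case unfolding length_Cons prod.lessThan_Suc_shift using Cons by (simp add: epsl_Cons)
qed

lemma per_var:
  fixes P Q :: "'n::finite \<Rightarrow> 'n \<Rightarrow> 'k::field"
  assumes QP: "\<And>i j. (\<Sum>k\<in>UNIV. Q i k * P k j) = (if i = j then 1 else 0)"
  shows "(\<Sum>y\<in>UNIV. subst_coef P Q x y * (if gdiag (subst_var x y) then 1 else 0)) = (if gdiag x then 1 else 0)"
proof -
  have *: "(\<Sum>\<alpha>\<in>UNIV. \<Sum>\<gamma>\<in>UNIV. Q i \<alpha> * P \<gamma> j * (if \<alpha> = \<gamma> then 1 else 0)) = (if i = j then 1 else 0)" for i j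
    using QP[of i j] by (simp add: if_distrib[of "\<lambda>x. _ * x"] cong: if_cong)
  show ?thesis using * by (cases x) (simp_all add: sum_pairs del: mult_if1)
qed

lemma AC_base:
  fixes P Q :: "'n::finite \<Rightarrow> 'n \<Rightarrow> 'k::field"
  assumes QP: "\<And>i j. (\<Sum>k\<in>UNIV. Q i k * P k j) = (if i = j then 1 else 0)"
  shows "AC P Q fl epsl = epsl fl"
proof -
  let ?n = "length fl"
  have "AC P Q fl epsl = (\<Sum>acs\<in>{acs. length acs = ?n}. \<Prod>t<?n. subst_coef P Q (fl ! t) (acs ! t) * (if gdiag (subst_var (fl ! t) (acs ! t)) then 1 else 0))"
    unfolding AC_def
  proof (intro sum.cong refl)
    fix acs :: "('n \<times> 'n) list" assume "acs \<in> {acs. length acs = ?n}"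
    then have l: "length acs = ?n" by simp
    have e: "epsl (map2 subst_var fl acs) = (\<Prod>t<?n. if gdiag (subst_var (fl ! t) (acs ! t)) then 1 else 0)"
      unfolding epsl_prod using l by (intro prod.cong) auto
    show "(\<Prod>t<?n. subst_coef P Q (fl ! t) (acs ! t)) * epsl (map2 subst_var fl acs)
      = (\<Prod>t<?n. subst_coef P Q (fl ! t) (acs ! t) * (if gdiag (subst_var (fl ! t) (acs ! t)) then 1 else 0))"
      unfolding e prod.distrib by (rule refl)
  qed
  also have "\<dots> = (\<Prod>t<?n. \<Sum>y\<in>UNIV. subst_coef P Q (fl ! t) y * (if gdiag (subst_var (fl ! t) y) then 1 else 0))"
    by (rule sum_prod_lists)
  also have "\<dots> = epsl fl"
    unfolding epsl_prod per_var[OF QP] by (rule refl)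
  finally show ?thesis .
qed

lemma map2_subst_upd: "map2 subst_var (fl[s := z]) (acs[s := y]) = (map2 subst_var fl acs)[s := subst_var z y]"
  by (simp add: zip_update map_update)

lemma KEY:
  fixes P Q :: "'n::finite \<Rightarrow> 'n \<Rightarrow> 'k::field" and \<Phi> :: "'n gvar list \<Rightarrow> 'k"
  assumes PQ: "\<And>i j. (\<Sum>k\<in>UNIV. P i k * Q k j) = (if i = j then 1 else 0)"
    and s: "s < length fl"
  shows "(\<Sum>k\<in>UNIV. gcoef (change_consts P Q C) a (fl ! s) k * AC P Q (fl[s := gshift (fl ! s) k]) \<Phi>)
    = (\<Sum>a'\<in>UNIV. P a' a * AC P Q fl (\<lambda>ml. \<Sum>k\<in>UNIV. gcoef C a' (ml ! s) k * \<Phi> (ml[s := gshift (ml ! s) k])))"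
proof -
  let ?n = "length fl"
  let ?x = "fl ! s"
  define D where "D = {acs::('n \<times> 'n) list. length acs = ?n \<and> acs ! s = undefined}"
  define K where "K acs = (\<Prod>t\<in>{..<?n} - {s}. subst_coef P Q (fl ! t) (acs ! t))" for acs
  define R where "R acs w = \<Phi> ((map2 subst_var fl acs)[s := w])" for acs w
  let ?sc = "subst_coef P Q"
  have A: "(\<Prod>t<?n. ?sc ((fl[s := z]) ! t) ((acs[s := y]) ! t)) = ?sc z y * K acs"
    if "acs \<in> D" for acs z y
  proof -
    have l: "length acs = ?n" using that by (simp add: D_def)
    have "(\<Prod>t<?n. ?sc ((fl[s := z]) ! t) ((acs[s := y]) ! t)) = ?sc ((fl[s := z]) ! s) y * (\<Prod>t\<in>{..<?n} - {s}. ?sc ((fl[s := z]) ! t) (acs ! t))"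
      by (rule prod_upd[OF s l])
    also have "(\<Prod>t\<in>{..<?n} - {s}. ?sc ((fl[s := z]) ! t) (acs ! t)) = K acs"
      unfolding K_def by (rule prod.cong) auto
    finally show ?thesis using s by simp
  qed
  have S: "(\<Sum>acs\<in>{acs. length acs = ?n}. F acs) = (\<Sum>acs\<in>D. \<Sum>y\<in>UNIV. F (acs[s := y]))" for F :: "('n \<times> 'n) list \<Rightarrow> 'k"
    unfolding D_def by (rule split_at[OF s])
  have lhs_k: "AC P Q (fl[s := gshift ?x k]) \<Phi> = (\<Sum>acs\<in>D. K acs * (\<Sum>y\<in>UNIV. ?sc (gshift ?x k) y * R acs (subst_var ?x y)))" for k
  proof -
    have "AC P Q (fl[s := gshift ?x k]) \<Phi> = (\<Sum>acs\<in>D. \<Sum>y\<in>UNIV. (\<Prod>t<?n. ?sc ((fl[s := gshift ?x k]) ! t) ((acs[s := y]) ! t)) * \<Phi> (map2 subst_var (fl[s := gshift ?x k]) (acs[s := y])))"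
      unfolding AC_def length_list_update by (rule S)
    also have "\<dots> = (\<Sum>acs\<in>D. K acs * (\<Sum>y\<in>UNIV. ?sc (gshift ?x k) y * R acs (subst_var ?x y)))"
      by (intro sum.cong refl) (simp add: A map2_subst_upd R_def sum_distrib_left mult_ac)
    finally show ?thesis .
  qed
  have rhs_a: "AC P Q fl (\<lambda>ml. \<Sum>k\<in>UNIV. gcoef C a' (ml ! s) k * \<Phi> (ml[s := gshift (ml ! s) k]))
     = (\<Sum>acs\<in>D. K acs * (\<Sum>y\<in>UNIV. ?sc ?x y * (\<Sum>k\<in>UNIV. gcoef C a' (subst_var ?x y) k * R acs (gshift (subst_var ?x y) k))))" for a'
  proof -
    have "AC P Q fl (\<lambda>ml. \<Sum>k\<in>UNIV. gcoef C a' (ml ! s) k * \<Phi> (ml[s := gshift (ml ! s) k]))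
      = (\<Sum>acs\<in>D. \<Sum>y\<in>UNIV. (\<Prod>t<?n. ?sc ((fl[s := ?x]) ! t) ((acs[s := y]) ! t)) *
          (\<Sum>k\<in>UNIV. gcoef C a' ((map2 subst_var (fl[s := ?x]) (acs[s := y])) ! s) k * \<Phi> ((map2 subst_var (fl[s := ?x]) (acs[s := y]))[s := gshift ((map2 subst_var (fl[s := ?x]) (acs[s := y])) ! s) k])))"
      unfolding AC_def list_update_id by (rule S)
    also have "\<dots> = (\<Sum>acs\<in>D. \<Sum>y\<in>UNIV. K acs * (?sc ?x y * (\<Sum>k\<in>UNIV. gcoef C a' (subst_var ?x y) k * R acs (gshift (subst_var ?x y) k))))"
    proof (intro sum.cong refl)
      fix acs y assume "acs \<in> D"
      then have l: "length acs = ?n" by (simp add: D_def)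
      have m: "map2 subst_var (fl[s := ?x]) (acs[s := y]) = (map2 subst_var fl acs)[s := subst_var ?x y]"
        by (rule map2_subst_upd)
      have ln: "s < length (map2 subst_var fl acs)" using l s by simp
      show "(\<Prod>t<?n. ?sc ((fl[s := ?x]) ! t) ((acs[s := y]) ! t)) *
          (\<Sum>k\<in>UNIV. gcoef C a' ((map2 subst_var (fl[s := ?x]) (acs[s := y])) ! s) k * \<Phi> ((map2 subst_var (fl[s := ?x]) (acs[s := y]))[s := gshift ((map2 subst_var (fl[s := ?x]) (acs[s := y])) ! s) k]))
        = K acs * (?sc ?x y * (\<Sum>k\<in>UNIV. gcoef C a' (subst_var ?x y) k * R acs (gshift (subst_var ?x y) k)))"
        unfolding A[OF \<open>acs \<in> D\<close>] m using ln by (simp add: R_def mult_ac)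
    qed
    also have "\<dots> = (\<Sum>acs\<in>D. K acs * (\<Sum>y\<in>UNIV. ?sc ?x y * (\<Sum>k\<in>UNIV. gcoef C a' (subst_var ?x y) k * R acs (gshift (subst_var ?x y) k))))"
      by (simp add: sum_distrib_left)
    finally show ?thesis .
  qed
  have "(\<Sum>k\<in>UNIV. gcoef (change_consts P Q C) a ?x k * AC P Q (fl[s := gshift ?x k]) \<Phi>)
     = (\<Sum>acs\<in>D. K acs * (\<Sum>k\<in>UNIV. gcoef (change_consts P Q C) a ?x k * (\<Sum>y\<in>UNIV. ?sc (gshift ?x k) y * R acs (subst_var ?x y))))"
    unfolding lhs_k by (simp add: sum_distrib_left mult_ac) (rule sum.swap)
  also have "\<dots> = (\<Sum>acs\<in>D. K acs * (\<Sum>a'\<in>UNIV. P a' a * (\<Sum>y\<in>UNIV. ?sc ?x y * (\<Sum>k\<in>UNIV. gcoef C a' (subst_var ?x y) k * R acs (gshift (subst_var ?x y) k)))))"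
    unfolding LOC[OF PQ] by (rule refl)
  also have "\<dots> = (\<Sum>a'\<in>UNIV. P a' a * AC P Q fl (\<lambda>ml. \<Sum>k\<in>UNIV. gcoef C a' (ml ! s) k * \<Phi> (ml[s := gshift (ml ! s) k])))"
    unfolding rhs_a by (simp add: sum_distrib_left mult_ac) (rule sum.swap)
  finally show ?thesis .
qed

lemma AC_sum:
  "AC P Q fl (\<lambda>ml. \<Sum>s<length ml. F s ml) = (\<Sum>s<length fl. AC P Q fl (F s))"
proof -
  have "AC P Q fl (\<lambda>ml. \<Sum>s<length ml. F s ml) = (\<Sum>acs\<in>{acs. length acs = length fl}. \<Sum>s<length fl.
      (\<Prod>t<length fl. subst_coef P Q (fl ! t) (acs ! t)) * F s (map2 subst_var fl acs))"
    unfolding AC_def by (intro sum.cong refl) (simp add: sum_distrib_left)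
  also have "\<dots> = (\<Sum>s<length fl. AC P Q fl (F s))"
    unfolding AC_def by (rule sum.swap)
  finally show ?thesis .
qed

lemma TT_main:
  fixes P Q :: "'n::finite \<Rightarrow> 'n \<Rightarrow> 'k::field" and C :: "'n \<Rightarrow> 'n \<Rightarrow> 'n \<Rightarrow> 'k"
  assumes inv: "inverse_matrices P Q"
  shows "pl (change_consts P Q C) w fl = TT P Q C w fl"
proof (induction w arbitrary: fl)
  have PQ: "\<And>i j. (\<Sum>k\<in>UNIV. P i k * Q k j) = (if i = j then 1 else 0)"
    and QP: "\<And>i j. (\<Sum>k\<in>UNIV. Q i k * P k j) = (if i = j then 1 else 0)"
    using inv unfolding inverse_matrices_def by auto
  case Nil
  have e: "pl C [] = epsl" by (rule ext) simp
  show ?case unfolding TT_def by (simp add: e AC_base[OF QP])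
next
  have PQ: "\<And>i j. (\<Sum>k\<in>UNIV. P i k * Q k j) = (if i = j then 1 else 0)"
    using inv unfolding inverse_matrices_def by auto
  case (Cons a v)
  let ?C' = "change_consts P Q C"
  let ?n = "length fl"
  let ?L = "{as::'n list. length as = length v}"
  define \<Psi> where "\<Psi> a' s as' ml = (\<Sum>k\<in>UNIV. gcoef C a' (ml ! s) k * pl C as' (ml[s := gshift (ml ! s) k]))" for a' s as' ml
  define Pv where "Pv as' = (\<Prod>t<length v. P (as' ! t) (v ! t))" for as'
  have "pl ?C' (a # v) fl = (\<Sum>s<?n. \<Sum>k\<in>UNIV. gcoef ?C' a (fl ! s) k * TT P Q C v (fl[s := gshift (fl ! s) k]))"
    by (simp add: Cons.IH)
  also have "\<dots> = (\<Sum>s<?n. \<Sum>as'\<in>?L. Pv as' * (\<Sum>k\<in>UNIV. gcoef ?C' a (fl ! s) k * AC P Q (fl[s := gshift (fl ! s) k]) (pl C as')))"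
    unfolding TT_def Pv_def by (intro sum.cong refl) (simp add: sum_distrib_left mult_ac sum.swap[of _ UNIV])
  also have "\<dots> = (\<Sum>s<?n. \<Sum>as'\<in>?L. Pv as' * (\<Sum>a'\<in>UNIV. P a' a * AC P Q fl (\<Psi> a' s as')))"
    unfolding \<Psi>_def by (intro sum.cong refl) (simp add: KEY[OF PQ])
  also have "\<dots> = (\<Sum>s<?n. \<Sum>as'\<in>?L. \<Sum>a'\<in>UNIV. P a' a * Pv as' * AC P Q fl (\<Psi> a' s as'))"
    by (simp add: sum_distrib_left mult_ac)
  also have "\<dots> = (\<Sum>a'\<in>UNIV. \<Sum>as'\<in>?L. \<Sum>s<?n. P a' a * Pv as' * AC P Q fl (\<Psi> a' s as'))"
  proof -
    have "(\<Sum>a'\<in>UNIV. \<Sum>as'\<in>?L. \<Sum>s<?n. P a' a * Pv as' * AC P Q fl (\<Psi> a' s as'))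
      = (\<Sum>s<?n. \<Sum>a'\<in>UNIV. \<Sum>as'\<in>?L. P a' a * Pv as' * AC P Q fl (\<Psi> a' s as'))"
      by (rule swap3)
    also have "\<dots> = (\<Sum>s<?n. \<Sum>as'\<in>?L. \<Sum>a'\<in>UNIV. P a' a * Pv as' * AC P Q fl (\<Psi> a' s as'))"
      by (rule sum.cong[OF refl], rule sum.swap)
    finally show ?thesis by simp
  qed
  also have "\<dots> = (\<Sum>a'\<in>UNIV. \<Sum>as'\<in>?L. P a' a * Pv as' * AC P Q fl (pl C (a' # as')))"
  proof (intro sum.cong refl)
    fix a' as'
    have "pl C (a' # as') = (\<lambda>ml. \<Sum>s<length ml. \<Psi> a' s as' ml)"
      by (rule ext) (simp add: \<Psi>_def)
    then show "(\<Sum>s<?n. P a' a * Pv as' * AC P Q fl (\<Psi> a' s as')) = P a' a * Pv as' * AC P Q fl (pl C (a' # as'))"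
      by (simp add: AC_sum sum_distrib_left)
  qed
  also have "\<dots> = TT P Q C (a # v) fl"
    unfolding TT_def length_Cons sum_lists_Suc Pv_def
    by (simp add: prod.lessThan_Suc_shift mult_ac del: prod.lessThan_Suc)
  finally show ?case .
qed

theorem proposition3p3:
  fixes C :: "'n::finite \<Rightarrow> 'n \<Rightarrow> 'n \<Rightarrow> 'k::field"
  assumes "leibniz_consts C"
  shows "(\<exists>!p. hopf_pairing C p \<and> pairs_generators C p) \<and>
    (\<forall>P Q. inverse_matrices P Q \<longrightarrow>
      (\<forall>p p'. hopf_pairing C p \<and> pairs_generators C p \<and>
              hopf_pairing (change_consts P Q C) p' \<and> pairs_generators (change_consts P Q C) p' \<longrightarrow>
              (\<forall>w fl. p' w (mset fl) = transported P Q p w fl)))"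
proof (intro conjI allI impI)
  show "\<exists>!p. hopf_pairing C p \<and> pairs_generators C p"
  proof (rule ex1I)
    show "hopf_pairing C (p0 C) \<and> pairs_generators C (p0 C)"
      using p0_hopf[OF assms] p0_gen by blast
  next
    fix p assume h: "hopf_pairing C p \<and> pairs_generators C p"
    show "p = p0 C"
    proof (rule ext, rule ext)
      fix w and f :: "'n gvar multiset"
      obtain fl where f: "f = mset fl" using ex_list by blast
      show "p w f = p0 C w f" unfolding f p0_mset using uniq h by blast
    qed
  qed
next
  fix P Q :: "'n \<Rightarrow> 'n \<Rightarrow> 'k" and p p' w and fl :: "'n gvar list"
  assume inv: "inverse_matrices P Q"
    and h: "hopf_pairing C p \<and> pairs_generators C p \<and>
              hopf_pairing (change_consts P Q C) p' \<and> pairs_generators (change_consts P Q C) p'"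
  have "p' w (mset fl) = pl (change_consts P Q C) w fl"
    using uniq h by blast
  also have "\<dots> = TT P Q C w fl" by (rule TT_main[OF inv])
  also have "\<dots> = transported P Q p w fl"
  proof -
    have hp: "hopf_pairing C p" and gp: "pairs_generators C p" using h by auto
    show ?thesis unfolding TT_def AC_def transported_def uniq[OF hp gp] by (rule refl)
  qed
  finally show "p' w (mset fl) = transported P Q p w fl" .
qed

end
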